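(* Let $q$ be a power of a prime $p$ and $n\ge 0$ an integer, and assume $F_n(1,x)$ is a permutation polynomial of $\mathbb{F}_q$. If $p=2$, then $3\mid n$. If $p$ is odd, then $n\not\equiv 1,2\pmod 6$.
   Context: For an integer $n\ge 1$, the $n$-th reversed Dickson polynomial of the third kind is $F_n(a,x)=\sum_{i=0}^{\lfloor n/2\rfloor}\frac{n-2i}{n-i}\binom{n-i}{i}(-x)^i a^{n-2i}$, where each coefficient $\frac{n-2i}{n-i}\binom{n-i}{i}$ is an integer (read in $\mathbb{F}_q$), and $F_0(a,x)=0$. A polynomial $f\in\mathbb{F}_q[x]$ is a permutation polynomial of $\mathbb{F}_q$ if $c\mapsto f(c)$ is a bijection of $\mathbb{F}_q$. *)

theory Defs
  imports "HOL-Computational_Algebra.Primes"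
begin

text \<open>Integer coefficient ((n-2i)/(n-i)) * binom(n-i, i) of the reversed Dickson
polynomial of the third kind (exact division for 0 <= i <= n div 2, n >= 1).\<close>
definition rdickson3_coeff :: "nat \<Rightarrow> nat \<Rightarrow> nat" where
  "rdickson3_coeff n i = ((n - 2 * i) * ((n - i) choose i)) div (n - i)"

definition rdickson3 :: "nat \<Rightarrow> 'a::field \<Rightarrow> 'a \<Rightarrow> 'a" where
  "rdickson3 n a x =
     (if n = 0 then 0
      else (\<Sum>i\<le>n div 2. of_nat (rdickson3_coeff n i) * (- x) ^ i * a ^ (n - 2 * i)))"

end

theory Submission
  imports Defs
begin

lemma coeff_eq:
  assumes "n \<ge> 1" "i \<le> n div 2"
  shows "rdickson3_coeff n i = (n - 1 - i) choose i"
proof -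
  have "(n - 2*i) * ((n - i) choose i) = (n - i) * ((n - i - 1) choose i)"
    using binomial_absorb_comp[of "n - i" i] by (simp add: diff_diff_add mult_2)
  moreover have "n - i > 0" using assms by auto
  ultimately show ?thesis unfolding rdickson3_coeff_def by simp
qed

definition H :: "nat \<Rightarrow> int" where
  "H m = (\<Sum>i\<le>m. int ((m - i) choose i) * (-1) ^ i)"

lemma H_ext:
  assumes "m \<le> N"
  shows "H m = (\<Sum>i\<le>N. int ((m - i) choose i) * (-1) ^ i)"
proof -
  have "(\<Sum>i\<le>N. int ((m - i) choose i) * (-1) ^ i) = (\<Sum>i\<le>m. int ((m - i) choose i) * (-1) ^ i)"
    by (rule sum.mono_neutral_right) (use assms in auto)
  then show ?thesis unfolding H_def by simp
qed

lemma pascal_pt: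
  "(m + 2 - i) choose i = ((m + 1 - i) choose i) + (if i = 0 then 0 else (m - (i - 1)) choose (i - 1))"
proof (cases i)
  case 0 then show ?thesis by simp
next
  case (Suc j)
  show ?thesis
  proof (cases "j \<le> m")
    case True
    then have "m + 2 - i = Suc (m - j)" "m + 1 - i = m - j" using Suc by auto
    then show ?thesis using Suc by simp
  next
    case False
    then have "m + 2 - i = 0" "m + 1 - i = 0" "m - (i - 1) = 0" using Suc by auto
    then show ?thesis using Suc by simp
  qed
qed

lemma H_rec: "H (m + 2) = H (m + 1) - H m"
proof -
  have "H (m + 2) = (\<Sum>i\<le>m+2. int ((m + 2 - i) choose i) * (-1) ^ i)"
    unfolding H_def by simp
  also have "\<dots> = (\<Sum>i\<le>m+2. int ((m + 1 - i) choose i) * (-1) ^ i)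
      + (\<Sum>i\<le>m+2. (if i = 0 then 0 else int ((m - (i - 1)) choose (i - 1))) * (-1) ^ i)"
  proof -
    have "int ((m + 2 - i) choose i) * (-1) ^ i = int ((m + 1 - i) choose i) * (-1) ^ i
       + (if i = 0 then 0 else int ((m - (i - 1)) choose (i - 1))) * (-1) ^ i" for i
      by (subst pascal_pt) (simp add: distrib_right)
    then show ?thesis by (simp add: sum.distrib)
  qed
  also have "(\<Sum>i\<le>m+2. int ((m + 1 - i) choose i) * (-1) ^ i) = H (m + 1)"
    by (rule H_ext[symmetric]) simp
  also have "(\<Sum>i\<le>m+2. (if i = 0 then 0 else int ((m - (i - 1)) choose (i - 1))) * (-1) ^ i)
      = (\<Sum>j\<le>m+1. int ((m - j) choose j) * (-1) ^ Suc j)"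
  proof -
    have e: "m + 2 = Suc (m + 1)" by simp
    show ?thesis unfolding e sum.atMost_Suc_shift by simp
  qed
  also have "\<dots> = - H m"
    using H_ext[of m "m+1"] by (simp add: sum_negf)
  finally show ?thesis by simp
qed

lemma H_period: "H (m + 6) = H m"
proof -
  have a: "H (k + 3) = - H k" for k
    using H_rec[of "k+1"] H_rec[of k] by (simp add: numeral_3_eq_3 numeral_2_eq_2)
  show ?thesis using a[of m] a[of "m+3"] by (simp add: add.commute)
qed

lemma H_mod: "H m = H (m mod 6)"
proof (induction m rule: less_induct)
  case (less m)
  show ?case
  proof (cases "m < 6")
    case True then show ?thesis by simp
  next
    case False
    then obtain k where k: "m = k + 6" by (metis add.commute le_Suc_ex not_less)
    then show ?thesis using less[of k] H_period[of k] by simp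
  qed
qed

lemma H_vals: "H 0 = 1" "H 1 = 1" "H 3 = -1" "H 4 = -1"
  by (simp_all add: H_def numeral_3_eq_3 numeral_eq_Suc)

lemma rd_formula:
  assumes "n \<ge> 1"
  shows "rdickson3 n (1::'a::field) x = (\<Sum>i\<le>n - 1. of_nat ((n - 1 - i) choose i) * (- x) ^ i)"
proof -
  have "rdickson3 n (1::'a) x = (\<Sum>i\<le>n div 2. of_nat ((n - 1 - i) choose i) * (- x) ^ i)"
    unfolding rdickson3_def using assms by (auto intro!: sum.cong simp: coeff_eq)
  also have "\<dots> = (\<Sum>i\<le>n - 1. of_nat ((n - 1 - i) choose i) * (- x) ^ i)"
  proof (rule sum.mono_neutral_left)
    show "\<forall>i\<in>{..n - 1} - {..n div 2}. of_nat ((n - 1 - i) choose i) * (- x) ^ i = 0"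
    proof
      fix i assume "i \<in> {..n - 1} - {..n div 2}"
      then have "n - 1 - i < i" by auto
      then show "of_nat ((n - 1 - i) choose i) * (- x) ^ i = 0" by (simp add: binomial_eq_0)
    qed
  qed (use assms in auto)
  finally show ?thesis .
qed

lemma rd_at0:
  assumes "n \<ge> 1" shows "rdickson3 n (1::'a::field) 0 = 1"
proof -
  have "(\<Sum>i\<le>n - 1. of_nat ((n - 1 - i) choose i) * (- (0::'a)) ^ i) = (\<Sum>i\<le>n - 1. if i = 0 then 1 else 0)"
    by (rule sum.cong) (auto simp: power_0_left)
  then show ?thesis unfolding rd_formula[OF assms] by simp
qed

lemma rd_at1:
  assumes "n \<ge> 1" shows "rdickson3 n (1::'a::field) 1 = of_int (H (n - 1))"
  unfolding rd_formula[OF assms] H_def by simp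

lemma mod6_pred: "(n::nat) mod 6 = r \<Longrightarrow> r \<ge> 1 \<Longrightarrow> (n - 1) mod 6 = r - 1"
proof -
  assume a: "n mod 6 = r" "r \<ge> 1"
  have "n = 6 * (n div 6) + r" using a(1) div_mult_mod_eq[of n 6] by simp
  then have "n - 1 = 6 * (n div 6) + (r - 1)" using a(2) by simp
  moreover have "r - 1 < 6" using a(1) by auto
  ultimately show ?thesis by simp
qed

lemma mod6_cases: "\<not> 3 dvd (n::nat) \<Longrightarrow> n mod 6 = 1 \<or> n mod 6 = 2 \<or> n mod 6 = 4 \<or> n mod 6 = 5"
proof -
  assume nd: "\<not> 3 dvd n"
  have m3: "n mod 3 = (n mod 6) mod 3" by (simp add: mod_mod_cancel)
  have "n mod 6 < 6" by simp
  then have "n mod 6 \<in> {0,1,2,3,4,5}" by auto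
  moreover have "n mod 6 \<noteq> 0" "n mod 6 \<noteq> 3" using nd m3 by (auto simp: dvd_eq_mod_eq_0)
  ultimately show ?thesis by auto
qed

theorem theorem3p1:
  fixes p :: nat and n :: nat
  assumes "prime p"
    and "CHAR('a::{field,finite}) = p"
    and "bij (\<lambda>c::'a. rdickson3 n 1 c)"
  shows "(p = 2 \<longrightarrow> 3 dvd n) \<and> (odd p \<longrightarrow> n mod 6 \<noteq> 1 \<and> n mod 6 \<noteq> 2)"
proof -
  have inj: "inj (\<lambda>c::'a. rdickson3 n 1 c)" using assms(3) bij_is_inj by blast
  have key: False if n1: "n \<ge> 1" and e: "rdickson3 n (1::'a) 1 = 1"
  proof -
    have "rdickson3 n (1::'a) 1 = rdickson3 n (1::'a) 0" using e rd_at0[OF n1, where 'a='a] by simp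
    then have "(1::'a) = 0" using inj unfolding inj_def by blast
    then show False by simp
  qed
  have Hn: "H (n - 1) = H ((n - 1) mod 6)" by (rule H_mod)
  have c12: "n mod 6 \<noteq> 1 \<and> n mod 6 \<noteq> 2"
  proof
    show "n mod 6 \<noteq> 1"
    proof
      assume h: "n mod 6 = 1"
      then have n1: "n \<ge> 1" by (cases n) auto
      have "(n - 1) mod 6 = 0" using mod6_pred[OF h] by simp
      then have "rdickson3 n (1::'a) 1 = 1" using rd_at1[OF n1, where 'a='a] Hn H_vals by simp
      then show False using key n1 by blast
    qed
    show "n mod 6 \<noteq> 2"
    proof
      assume h: "n mod 6 = 2"
      then have n1: "n \<ge> 1" by (cases n) auto
      have "(n - 1) mod 6 = 1" using mod6_pred[OF h] by simp
      then have "rdickson3 n (1::'a) 1 = 1" using rd_at1[OF n1, where 'a='a] Hn H_vals by simp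
      then show False using key n1 by blast
    qed
  qed
  have c2: "3 dvd n" if "p = 2"
  proof (rule ccontr)
    assume nd: "\<not> 3 dvd n"
    have two: "(2::'a) = 0" using assms(2) that of_nat_CHAR[where 'a='a] by simp
    have m1: "(-1::'a) = 1" using two by (simp add: neg_eq_iff_add_eq_0 one_add_one)
    have h: "n mod 6 = 4 \<or> n mod 6 = 5" using nd c12 mod6_cases by blast
    then have n1: "n \<ge> 1" by (cases n) auto
    have "(n - 1) mod 6 = 3 \<or> (n - 1) mod 6 = 4" using h mod6_pred[of n 4] mod6_pred[of n 5] by auto
    then have "H (n - 1) = -1" using Hn H_vals by auto
    then have "rdickson3 n (1::'a) 1 = 1" using rd_at1[OF n1, where 'a='a] m1 by simp
    then show False using key n1 by blast
  qed
  show ?thesis using c12 c2 by blast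
qed

end
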